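(* Let $\Pi_n=\{\pi_1,\ldots,\pi_n\}$ be a finite set of policies of a discrete mean-field game (setting in the context) with $J$ $\mu$-diff-affine, and let $M_{ij}=J(\pi_i,\mu^{\pi_j})$. Let $\rho$ be a finitely supported distribution over $\Delta(\Pi_n)$ (writing $\nu_i=\nu(\pi_i)$). (i) If $\sum_i\max_k\sum_\nu\rho(\nu)\,\nu_i\sum_j\nu_j\big(M_{kj}-M_{ij}\big)\le0$, then $\sum_i\max_k\sum_\nu\rho(\nu)\nu_i\big(J(\pi_k,\mu(\nu))-J(\pi_i,\mu(\nu))\big)\le0$; in particular $\rho$ is a mean-field correlated equilibrium when deviations are restricted to $\Pi_n$. (ii) If $\max_k\sum_\nu\rho(\nu)\sum_i\sum_j\nu_i\nu_j\big(M_{kj}-M_{ij}\big)\le0$, then $\max_k\sum_\nu\rho(\nu)\big(J(\pi_k,\mu(\nu))-J(\pi(\nu),\mu(\nu))\big)\le0$, i.e. $\rho$ is a mean-field coarse correlated equilibrium when deviations are restricted to $\Pi_n$.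
   Context: A discrete mean-field game consists of finite state set $\mathcal X$, finite action set $\mathcal A$, reward $r:\mathcal X\times\mathcal A\times\Delta(\mathcal X)\to\mathbb R$, transitions $p(x'\mid x,a)$ independent of the population distribution, initial distribution $\mu_0$. A policy is $\pi:\mathcal X\to\Delta(\mathcal A)$; $\mu^\pi$ is its state occupancy measure; $J(\pi,\mu)=\sum_{x,a}\mu^\pi(x)\pi(x,a)r(x,a,\mu)$. For $\nu\in\Delta(\Pi_n)$, $\mu(\nu)=\sum_j\nu(\pi_j)\mu^{\pi_j}$ and $J(\pi(\nu),\mu)=\sum_i\nu(\pi_i)J(\pi_i,\mu)$, where $\pi(\nu)$ samples a policy from $\nu$ at the start and plays it. $J$ is $\mu$-diff-affine if for all policies $\pi,\pi'$ the map $\mu\mapsto J(\pi,\mu)-J(\pi',\mu)$ is affine. A mean-field correlated equilibrium (deviations in $\Pi_n$) is a $\rho$ with $\sum_\nu\rho(\nu)\nu(\pi_i)(J(\pi_k,\mu(\nu))-J(\pi_i,\mu(\nu)))\le0$ for all $i,k$. *)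

theory Defs
  imports Complex_Main
begin

definition is_dist :: "('b::finite \<Rightarrow> real) \<Rightarrow> bool" where
  "is_dist d \<longleftrightarrow> (\<forall>b. 0 \<le> d b) \<and> (\<Sum>b\<in>UNIV. d b) = 1"

(* Distributions over the indices {0..<n} of the finite policy set Pi_n;
   nu i = nu(pi_i), canonically 0 outside the index range *)
definition is_dist_n :: "nat \<Rightarrow> (nat \<Rightarrow> real) \<Rightarrow> bool" where
  "is_dist_n n \<nu> \<longleftrightarrow> (\<forall>i<n. 0 \<le> \<nu> i) \<and> (\<forall>i\<ge>n. \<nu> i = 0) \<and> (\<Sum>i<n. \<nu> i) = 1"

definition is_policy :: "('x::finite \<Rightarrow> 'a::finite \<Rightarrow> real) \<Rightarrow> bool" where
  "is_policy \<pi> \<longleftrightarrow> (\<forall>x. is_dist (\<pi> x))"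

(* J(pi, mu) = sum_{x,a} mu^pi(x) pi(x,a) r(x,a,mu); occ pi = mu^pi *)
definition Jv :: "(('x::finite \<Rightarrow> 'a::finite \<Rightarrow> real) \<Rightarrow> 'x \<Rightarrow> real)
     \<Rightarrow> ('x \<Rightarrow> 'a \<Rightarrow> ('x \<Rightarrow> real) \<Rightarrow> real)
     \<Rightarrow> ('x \<Rightarrow> 'a \<Rightarrow> real) \<Rightarrow> ('x \<Rightarrow> real) \<Rightarrow> real" where
  "Jv occ r \<pi> \<mu> = (\<Sum>x\<in>UNIV. \<Sum>a\<in>UNIV. occ \<pi> x * \<pi> x a * r x a \<mu>)"

definition mu_mix :: "(('x::finite \<Rightarrow> 'a::finite \<Rightarrow> real) \<Rightarrow> 'x \<Rightarrow> real)
     \<Rightarrow> (nat \<Rightarrow> ('x \<Rightarrow> 'a \<Rightarrow> real)) \<Rightarrow> nat \<Rightarrow> (nat \<Rightarrow> real) \<Rightarrow> 'x \<Rightarrow> real" where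
  "mu_mix occ pol n \<nu> = (\<lambda>x. \<Sum>j<n. \<nu> j * occ (pol j) x)"

(* J(pi(nu), mu) = sum_i nu(pi_i) J(pi_i, mu) *)
definition J_mix where
  "J_mix occ r pol n \<nu> \<mu> = (\<Sum>i<n. \<nu> i * Jv occ r (pol i) \<mu>)"

definition mu_diff_affine where
  "mu_diff_affine occ r \<longleftrightarrow>
     (\<forall>\<pi> \<pi>'. is_policy \<pi> \<longrightarrow> is_policy \<pi>' \<longrightarrow>
       (\<forall>\<mu> \<mu>' (t::real). is_dist \<mu> \<longrightarrow> is_dist \<mu>' \<longrightarrow> 0 \<le> t \<longrightarrow> t \<le> 1 \<longrightarrow>
          (let f = (\<lambda>m. Jv occ r \<pi> m - Jv occ r \<pi>' m)
           in f (\<lambda>x. (1 - t) * \<mu> x + t * \<mu>' x) = (1 - t) * f \<mu> + t * f \<mu>')))"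

(* Mean-field correlated equilibrium with deviations restricted to Pi_n;
   rho is given by its finite support R and weights *)
definition mf_correlated_eq where
  "mf_correlated_eq occ r pol n R \<rho> \<longleftrightarrow>
     (\<forall>i<n. \<forall>k<n. (\<Sum>\<nu>\<in>R. \<rho> \<nu> * \<nu> i *
        (Jv occ r (pol k) (mu_mix occ pol n \<nu>) - Jv occ r (pol i) (mu_mix occ pol n \<nu>))) \<le> 0)"

definition mf_coarse_correlated_eq where
  "mf_coarse_correlated_eq occ r pol n R \<rho> \<longleftrightarrow>
     Max ((\<lambda>k. \<Sum>\<nu>\<in>R. \<rho> \<nu> *
        (Jv occ r (pol k) (mu_mix occ pol n \<nu>) - J_mix occ r pol n \<nu> (mu_mix occ pol n \<nu>))) ` {..<n}) \<le> 0"

end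

theory Submission
  imports Defs
begin

lemma mix_dist:
  fixes occ :: "('x::finite \<Rightarrow> 'a::finite \<Rightarrow> real) \<Rightarrow> 'x \<Rightarrow> real"
  assumes occ_dist: "\<And>\<pi>. is_policy \<pi> \<Longrightarrow> is_dist (occ \<pi>)"
    and pols: "\<And>j. j < m \<Longrightarrow> is_policy (pol j)"
    and wnn: "\<And>j. j < m \<Longrightarrow> 0 \<le> w j"
    and wsum: "(\<Sum>j<m. w j) = 1"
  shows "is_dist (\<lambda>x. \<Sum>j<m. w j * occ (pol j) x)"
proof -
  have od: "\<And>j. j < m \<Longrightarrow> is_dist (occ (pol j))" using occ_dist pols by blast
  have nn: "\<forall>x. 0 \<le> (\<Sum>j<m. w j * occ (pol j) x)"
    using od wnn by (auto intro!: sum_nonneg simp: is_dist_def)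
  have "(\<Sum>x\<in>UNIV. \<Sum>j<m. w j * occ (pol j) x) = (\<Sum>j<m. w j * (\<Sum>x\<in>UNIV. occ (pol j) x))"
    by (subst sum.swap) (simp add: sum_distrib_left)
  also have "\<dots> = (\<Sum>j<m. w j)"
    using od by (intro sum.cong) (auto simp: is_dist_def)
  finally show ?thesis using wsum nn by (simp add: is_dist_def)
qed

lemma affine_mix:
  fixes occ :: "('x::finite \<Rightarrow> 'a::finite \<Rightarrow> real) \<Rightarrow> 'x \<Rightarrow> real"
    and m :: nat and w :: "nat \<Rightarrow> real"
  assumes occ_dist: "\<And>\<pi>. is_policy \<pi> \<Longrightarrow> is_dist (occ \<pi>)"
    and affine: "mu_diff_affine occ r"
    and p1: "is_policy \<pi>" and p2: "is_policy \<pi>'"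
  shows "(\<forall>j<m. is_policy (pol j)) \<longrightarrow> (\<forall>j<m. 0 \<le> w j) \<longrightarrow> (\<Sum>j<m. w j) = 1 \<longrightarrow>
    Jv occ r \<pi> (\<lambda>x. \<Sum>j<m. w j * occ (pol j) x) - Jv occ r \<pi>' (\<lambda>x. \<Sum>j<m. w j * occ (pol j) x)
    = (\<Sum>j<m. w j * (Jv occ r \<pi> (occ (pol j)) - Jv occ r \<pi>' (occ (pol j))))"
proof (induction m arbitrary: w)
  case 0
  then show ?case by simp
next
  case (Suc m)
  show ?case
  proof (intro impI)
    assume pols: "\<forall>j<Suc m. is_policy (pol j)" and wnn: "\<forall>j<Suc m. 0 \<le> w j"
      and ws: "(\<Sum>j<Suc m. w j) = 1"
    define f where "f = (\<lambda>m. Jv occ r \<pi> m - Jv occ r \<pi>' m)"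
    define t where "t = w m"
    have rest: "(\<Sum>j<m. w j) = 1 - t" using ws by (simp add: t_def)
    have restnn: "0 \<le> (\<Sum>j<m. w j)" using wnn by (auto intro!: sum_nonneg)
    show "Jv occ r \<pi> (\<lambda>x. \<Sum>j<Suc m. w j * occ (pol j) x) - Jv occ r \<pi>' (\<lambda>x. \<Sum>j<Suc m. w j * occ (pol j) x)
      = (\<Sum>j<Suc m. w j * (Jv occ r \<pi> (occ (pol j)) - Jv occ r \<pi>' (occ (pol j))))"
    proof (cases "t = 1")
      case True
      have z: "\<forall>j\<in>{..<m}. w j = 0"
        using rest True wnn sum_nonneg_eq_0_iff[of "{..<m}" w] by auto
      have e1: "(\<lambda>x. \<Sum>j<Suc m. w j * occ (pol j) x) = occ (pol m)"
        using z True by (auto simp: t_def)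
      have e2: "(\<Sum>j<Suc m. w j * (Jv occ r \<pi> (occ (pol j)) - Jv occ r \<pi>' (occ (pol j))))
          = Jv occ r \<pi> (occ (pol m)) - Jv occ r \<pi>' (occ (pol m))"
        using z True by (auto simp: t_def)
      show ?thesis unfolding e1 e2 ..
    next
      case False
      have tlt: "t < 1" using False rest restnn by linarith
      have t0: "0 \<le> t" using wnn by (simp add: t_def)
      define w' where "w' = (\<lambda>j. w j / (1 - t))"
      have w'nn: "\<forall>j<m. 0 \<le> w' j" using wnn tlt by (auto simp: w'_def)
      have w's: "(\<Sum>j<m. w' j) = 1" using rest tlt
        by (simp add: w'_def sum_divide_distrib[symmetric])
      have IH: "f (\<lambda>x. \<Sum>j<m. w' j * occ (pol j) x)
        = (\<Sum>j<m. w' j * f (occ (pol j)))"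
        using Suc.IH[of w'] pols w'nn w's by (simp add: f_def)
      have d1: "is_dist (\<lambda>x. \<Sum>j<m. w' j * occ (pol j) x)"
        by (rule mix_dist[OF occ_dist]) (use pols w'nn w's in auto)
      have d2: "is_dist (occ (pol m))" using occ_dist pols by auto
      have aff: "f (\<lambda>x. (1 - t) * (\<Sum>j<m. w' j * occ (pol j) x) + t * occ (pol m) x)
          = (1 - t) * f (\<lambda>x. \<Sum>j<m. w' j * occ (pol j) x) + t * f (occ (pol m))"
      proof -
        have "\<forall>\<mu> \<mu>' (t::real). is_dist \<mu> \<longrightarrow> is_dist \<mu>' \<longrightarrow> 0 \<le> t \<longrightarrow> t \<le> 1 \<longrightarrow>
           f (\<lambda>x. (1 - t) * \<mu> x + t * \<mu>' x) = (1 - t) * f \<mu> + t * f \<mu>'"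
          using affine p1 p2 unfolding mu_diff_affine_def f_def Let_def by blast
        then show ?thesis using d1 d2 t0 tlt by simp
      qed
      have mixeq: "(\<lambda>x. (1 - t) * (\<Sum>j<m. w' j * occ (pol j) x) + t * occ (pol m) x)
          = (\<lambda>x. \<Sum>j<Suc m. w j * occ (pol j) x)"
        using tlt by (auto simp: w'_def sum_distrib_left t_def)
      have "(1 - t) * (\<Sum>j<m. w' j * f (occ (pol j))) = (\<Sum>j<m. w j * f (occ (pol j)))"
        using tlt by (auto simp: w'_def sum_distrib_left)
      then have "f (\<lambda>x. \<Sum>j<Suc m. w j * occ (pol j) x) = (\<Sum>j<Suc m. w j * f (occ (pol j)))"
        using aff mixeq IH by (simp add: t_def)
      then show ?thesis by (simp add: f_def)
    qed
  qed
qed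

theorem mainTheorem10:
  fixes occ :: "('x::finite \<Rightarrow> 'a::finite \<Rightarrow> real) \<Rightarrow> 'x \<Rightarrow> real"
    and r :: "'x \<Rightarrow> 'a \<Rightarrow> ('x \<Rightarrow> real) \<Rightarrow> real"
    and pol :: "nat \<Rightarrow> ('x \<Rightarrow> 'a \<Rightarrow> real)"
    and n :: nat
    and R :: "(nat \<Rightarrow> real) set"
    and \<rho> :: "(nat \<Rightarrow> real) \<Rightarrow> real"
    and M :: "nat \<Rightarrow> nat \<Rightarrow> real"
  assumes occ_dist: "\<And>\<pi>. is_policy \<pi> \<Longrightarrow> is_dist (occ \<pi>)"
    and affine: "mu_diff_affine occ r"
    and pols: "\<And>i. i < n \<Longrightarrow> is_policy (pol i)"
    and M_def: "\<And>i j. M i j = Jv occ r (pol i) (occ (pol j))"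
    and R_fin: "finite R"
    and R_dist: "\<And>\<nu>. \<nu> \<in> R \<Longrightarrow> is_dist_n n \<nu>"
    and \<rho>_nonneg: "\<And>\<nu>. \<nu> \<in> R \<Longrightarrow> 0 \<le> \<rho> \<nu>"
    and \<rho>_sum: "(\<Sum>\<nu>\<in>R. \<rho> \<nu>) = 1"
  shows "((\<Sum>i<n. Max ((\<lambda>k. \<Sum>\<nu>\<in>R. \<rho> \<nu> * \<nu> i * (\<Sum>j<n. \<nu> j * (M k j - M i j))) ` {..<n})) \<le> 0
          \<longrightarrow> (\<Sum>i<n. Max ((\<lambda>k. \<Sum>\<nu>\<in>R. \<rho> \<nu> * \<nu> i *
                 (Jv occ r (pol k) (mu_mix occ pol n \<nu>) - Jv occ r (pol i) (mu_mix occ pol n \<nu>))) ` {..<n})) \<le> 0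
              \<and> mf_correlated_eq occ r pol n R \<rho>)
       \<and> (Max ((\<lambda>k. \<Sum>\<nu>\<in>R. \<rho> \<nu> * (\<Sum>i<n. \<Sum>j<n. \<nu> i * \<nu> j * (M k j - M i j))) ` {..<n}) \<le> 0
          \<longrightarrow> mf_coarse_correlated_eq occ r pol n R \<rho>)"
proof -
  have key: "Jv occ r (pol k) (mu_mix occ pol n \<nu>) - Jv occ r (pol i) (mu_mix occ pol n \<nu>)
      = (\<Sum>j<n. \<nu> j * (M k j - M i j))" if "\<nu> \<in> R" "k < n" "i < n" for \<nu> k i
  proof -
    have d: "is_dist_n n \<nu>" using R_dist that by blast
    show ?thesis
      using affine_mix[OF occ_dist affine pols[OF that(2)] pols[OF that(3)], of n pol \<nu>]
        pols d unfolding is_dist_n_def mu_mix_def M_def by auto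
  qed
  define S where "S i k = (\<Sum>\<nu>\<in>R. \<rho> \<nu> * \<nu> i * (\<Sum>j<n. \<nu> j * (M k j - M i j)))" for i k
  have SJ: "(\<Sum>\<nu>\<in>R. \<rho> \<nu> * \<nu> i *
       (Jv occ r (pol k) (mu_mix occ pol n \<nu>) - Jv occ r (pol i) (mu_mix occ pol n \<nu>))) = S i k"
    if "k < n" "i < n" for i k
    unfolding S_def using key that by (intro sum.cong) auto
  have img1: "(\<lambda>k. \<Sum>\<nu>\<in>R. \<rho> \<nu> * \<nu> i *
       (Jv occ r (pol k) (mu_mix occ pol n \<nu>) - Jv occ r (pol i) (mu_mix occ pol n \<nu>))) ` {..<n}
     = S i ` {..<n}" if "i < n" for i
    using SJ that by (intro image_cong) auto
  have Sii: "S i i = 0" for i by (simp add: S_def)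
  have part1: "(\<Sum>i<n. Max (S i ` {..<n})) \<le> 0 \<longrightarrow>
     (\<Sum>i<n. Max ((\<lambda>k. \<Sum>\<nu>\<in>R. \<rho> \<nu> * \<nu> i *
                 (Jv occ r (pol k) (mu_mix occ pol n \<nu>) - Jv occ r (pol i) (mu_mix occ pol n \<nu>))) ` {..<n})) \<le> 0
              \<and> mf_correlated_eq occ r pol n R \<rho>"
  proof
    assume h: "(\<Sum>i<n. Max (S i ` {..<n})) \<le> 0"
    have eqs: "(\<Sum>i<n. Max ((\<lambda>k. \<Sum>\<nu>\<in>R. \<rho> \<nu> * \<nu> i *
                 (Jv occ r (pol k) (mu_mix occ pol n \<nu>) - Jv occ r (pol i) (mu_mix occ pol n \<nu>))) ` {..<n}))
        = (\<Sum>i<n. Max (S i ` {..<n}))"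
      using img1 by (intro sum.cong) auto
    have ge: "0 \<le> Max (S i ` {..<n})" if "i < n" for i
      using that Sii by (intro Max_ge_iff[THEN iffD2]) (auto intro!: bexI[of _ i])
    have z: "Max (S i ` {..<n}) = 0" if "i < n" for i
    proof -
      have "\<forall>i\<in>{..<n}. Max (S i ` {..<n}) = 0"
        using sum_nonneg_eq_0_iff[of "{..<n}" "\<lambda>i. Max (S i ` {..<n})"] ge h
          sum_nonneg[of "{..<n}" "\<lambda>i. Max (S i ` {..<n})"] by auto
      then show ?thesis using that by auto
    qed
    have "S i k \<le> 0" if "i < n" "k < n" for i k
      using z[OF that(1)] Max_ge[of "S i ` {..<n}" "S i k"] that by auto
    then have "mf_correlated_eq occ r pol n R \<rho>"
      unfolding mf_correlated_eq_def using SJ by auto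
    then show "(\<Sum>i<n. Max ((\<lambda>k. \<Sum>\<nu>\<in>R. \<rho> \<nu> * \<nu> i *
                 (Jv occ r (pol k) (mu_mix occ pol n \<nu>) - Jv occ r (pol i) (mu_mix occ pol n \<nu>))) ` {..<n})) \<le> 0
              \<and> mf_correlated_eq occ r pol n R \<rho>" using eqs h by simp
  qed
  have key2: "Jv occ r (pol k) (mu_mix occ pol n \<nu>) - J_mix occ r pol n \<nu> (mu_mix occ pol n \<nu>)
      = (\<Sum>i<n. \<Sum>j<n. \<nu> i * \<nu> j * (M k j - M i j))" if "\<nu> \<in> R" "k < n" for \<nu> k
  proof -
    have d: "is_dist_n n \<nu>" using R_dist that by blast
    have "Jv occ r (pol k) (mu_mix occ pol n \<nu>) - J_mix occ r pol n \<nu> (mu_mix occ pol n \<nu>)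
       = (\<Sum>i<n. \<nu> i * (Jv occ r (pol k) (mu_mix occ pol n \<nu>) - Jv occ r (pol i) (mu_mix occ pol n \<nu>)))"
      using d by (simp add: J_mix_def is_dist_n_def right_diff_distrib sum_subtractf
          sum_distrib_right[symmetric])
    also have "\<dots> = (\<Sum>i<n. \<nu> i * (\<Sum>j<n. \<nu> j * (M k j - M i j)))"
      using key that by (intro sum.cong) auto
    also have "\<dots> = (\<Sum>i<n. \<Sum>j<n. \<nu> i * \<nu> j * (M k j - M i j))"
      by (simp add: sum_distrib_left mult.assoc)
    finally show ?thesis .
  qed
  have img2: "(\<lambda>k. \<Sum>\<nu>\<in>R. \<rho> \<nu> * (\<Sum>i<n. \<Sum>j<n. \<nu> i * \<nu> j * (M k j - M i j))) ` {..<n}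
      = (\<lambda>k. \<Sum>\<nu>\<in>R. \<rho> \<nu> *
        (Jv occ r (pol k) (mu_mix occ pol n \<nu>) - J_mix occ r pol n \<nu> (mu_mix occ pol n \<nu>))) ` {..<n}"
    using key2 by (intro image_cong refl sum.cong) auto
  show ?thesis
    using part1 img2 unfolding S_def mf_coarse_correlated_eq_def by simp
qed

end
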